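(* With $n,\alpha,N,L,\ell$ as below: for $0\le k\le L-1$ and $1\le i\le N-L+1$, \[ \sum_{\substack{w\in W_k^>\\ p_1(w)=i}}q^{\mathrm{quinv}'(w)}=q^{\binom{\alpha_\ell}{2}+\cdots+\binom{\alpha_{n-1}}{2}+\binom{k+1}{2}+(i-1)L}\begin{bmatrix}N-L\\ \alpha_2,\dots,\alpha_{n-1}\end{bmatrix}\begin{bmatrix}N-i\\ k,\ N-L-i+1,\ L-k-1\end{bmatrix}, \] and for $1\le k\le L$ and $1\le j\le N-L+1$, \[ \sum_{\substack{w\in W_k^{\le}\\ p_n(w)=j}}q^{\mathrm{quinv}'(w)}=q^{\binom{\alpha_\ell}{2}+\cdots+\binom{\alpha_{n-1}}{2}+\binom{k}{2}+(j-1)L}\begin{bmatrix}N-L\\ \alpha_2,\dots,\alpha_{n-1}\end{bmatrix}\begin{bmatrix}N-j\\ k-1,\ N-L-j+1,\ L-k\end{bmatrix}. \]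
   Context: $n\ge3$, $\alpha=(\alpha_2,\dots,\alpha_{n-1})$ positive integers, $|\alpha|=\sum\alpha_i$, $N>|\alpha|$, $L=N-|\alpha|$, $2\le\ell\le n$. For $0\le k\le L$, $W_k$ is the set of words $w=(w_1,\dots,w_N)$ over $\{1,\dots,n\}$ with exactly $k$ letters $n$, exactly $L-k$ letters $1$, and exactly $\alpha_i$ letters $i$ for $2\le i\le n-1$. $\mathrm{coinv}(w)=\#\{(i,j):i<j,w_i<w_j\}$, and $\mathrm{quinv}'(w)=\mathrm{coinv}(w)+\binom{\alpha_\ell}{2}+\cdots+\binom{\alpha_{n-1}}{2}+\binom{k}{2}$ for $w\in W_k$ (empty middle sum if $\ell=n$). $p_n(w)$ is the position from the left of the leftmost $n$ in $w$; $p_1(w)$ is the position counted from the right of the rightmost $1$ in the word obtained from $w$ by deleting all $n$'s. $W_k^{\le}=\{w\in W_k:p_n(w)\le p_1(w)\}$, $W_k^>=\{w\in W_k:p_n(w)>p_1(w)\}$, with conventions $W_0=W_0^>$, $W_L=W_L^{\le}$. $q$-factorials $[m]!=\prod_{s=1}^m(1+q+\cdots+q^{s-1})$; $q$-multinomial $\begin{bmatrix}m\\ \beta_1,\dots,\beta_s\end{bmatrix}=\frac{[m]!}{[\beta_1]!\cdots[\beta_s]!}$ when all $\beta_i\ge0$ and $\sum\beta_i=m$, and $0$ if some $\beta_i<0$. *)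

theory Defs
  imports "HOL-Computational_Algebra.Polynomial"
begin

definition qX :: "int poly" where "qX = [:0, 1:]"

definition qint :: "nat \<Rightarrow> int poly" where
  "qint s = (\<Sum>t<s. qX ^ t)"

definition qfact :: "nat \<Rightarrow> int poly" where
  "qfact m = (\<Prod>s=1..m. qint s)"

text \<open>q-multinomial [m; beta_1,...,beta_s] = [m]!/([beta_1]!...[beta_s]!), and 0 if some beta_i < 0.
  The quotient is exact polynomial division (the multinomial is a polynomial).\<close>
definition qmultinomial :: "int \<Rightarrow> int list \<Rightarrow> int poly" where
  "qmultinomial m \<beta> =
     (if (\<exists>b\<in>set \<beta>. b < 0) then 0
      else qfact (nat m) div (\<Prod>b\<leftarrow>\<beta>. qfact (nat b)))"

definition asum :: "nat \<Rightarrow> (nat \<Rightarrow> nat) \<Rightarrow> nat" where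
  "asum n \<alpha> = (\<Sum>i=2..n-1. \<alpha> i)"

definition Wset :: "nat \<Rightarrow> (nat \<Rightarrow> nat) \<Rightarrow> nat \<Rightarrow> nat \<Rightarrow> nat list set" where
  "Wset n \<alpha> N k = {w. length w = N \<and> set w \<subseteq> {1..n} \<and>
      count_list w n = k \<and> count_list w 1 = (N - asum n \<alpha>) - k \<and>
      (\<forall>i\<in>{2..n-1}. count_list w i = \<alpha> i)}"

definition coinv :: "nat list \<Rightarrow> nat" where
  "coinv w = card {(i, j). i < j \<and> j < length w \<and> w ! i < w ! j}"

definition quinv' :: "nat \<Rightarrow> (nat \<Rightarrow> nat) \<Rightarrow> nat \<Rightarrow> nat \<Rightarrow> nat list \<Rightarrow> nat" where
  "quinv' n \<alpha> ell k w = coinv w + (\<Sum>i=ell..n-1. \<alpha> i choose 2) + (k choose 2)"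

definition pn :: "nat \<Rightarrow> nat list \<Rightarrow> nat" where
  "pn n w = (LEAST i. i < length w \<and> w ! i = n) + 1"

definition p1 :: "nat \<Rightarrow> nat list \<Rightarrow> nat" where
  "p1 n w = (let v = rev (filter (\<lambda>x. x \<noteq> n) w) in (LEAST i. i < length v \<and> v ! i = 1) + 1)"

text \<open>W_k^<= and W_k^>, with conventions W_0 = W_0^> and W_L = W_L^<=.\<close>
definition Wle :: "nat \<Rightarrow> (nat \<Rightarrow> nat) \<Rightarrow> nat \<Rightarrow> nat \<Rightarrow> nat list set" where
  "Wle n \<alpha> N k = {w \<in> Wset n \<alpha> N k.
      k = N - asum n \<alpha> \<or> (k \<noteq> 0 \<and> pn n w \<le> p1 n w)}"

definition Wgt :: "nat \<Rightarrow> (nat \<Rightarrow> nat) \<Rightarrow> nat \<Rightarrow> nat \<Rightarrow> nat list set" where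
  "Wgt n \<alpha> N k = {w \<in> Wset n \<alpha> N k.
      k = 0 \<or> (k \<noteq> N - asum n \<alpha> \<and> pn n w > p1 n w)}"

end

theory Submission
  imports Defs
begin

fun cv :: "nat list \<Rightarrow> nat" where
  "cv [] = 0"
| "cv (a # w) = length (filter (\<lambda>x. a < x) w) + cv w"

lemma coinv_Cons: "coinv (a # w) = length (filter (\<lambda>x. a < x) w) + coinv w"
proof -
  let ?S = "{(i, j). i < j \<and> j < length (a#w) \<and> (a#w) ! i < (a#w) ! j}"
  let ?A = "(\<lambda>j. (0::nat, Suc j)) ` {j. j < length w \<and> a < w ! j}"
  let ?B = "(\<lambda>(i, j). (Suc i, Suc j)) ` {(i, j). i < j \<and> j < length w \<and> w ! i < w ! j}"
  have S: "?S = ?A \<union> ?B"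
  proof (rule set_eqI, rule iffI)
    fix p assume "p \<in> ?S"
    then obtain i j where p: "p = (i, j)" "i < j" "j < Suc (length w)" "(a#w) ! i < (a#w) ! j" by auto
    then obtain j' where j': "j = Suc j'" by (cases j) auto
    show "p \<in> ?A \<union> ?B"
    proof (cases i)
      case 0 then show ?thesis using p j' by auto
    next
      case (Suc i')
      then have "(i', j') \<in> {(i, j). i < j \<and> j < length w \<and> w ! i < w ! j}" using p j' by auto
      moreover have "p = (\<lambda>(i, j). (Suc i, Suc j)) (i', j')" using p j' Suc by simp
      ultimately show ?thesis by (intro UnI2 image_eqI)
    qed
  next
    fix p assume "p \<in> ?A \<union> ?B" then show "p \<in> ?S" by auto
  qed
  have fA: "finite {j. j < length w \<and> a < w ! j}" by auto
  have fB: "finite {(i, j). i < j \<and> j < length w \<and> w ! i < w ! j}"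
    by (rule finite_subset[of _ "{..<length w} \<times> {..<length w}"]) auto
  have "card ?S = card ?A + card ?B"
    unfolding S by (rule card_Un_disjoint) (use fA fB in auto)
  also have "card ?A = card {j. j < length w \<and> a < w ! j}"
    by (rule card_image) (auto simp: inj_on_def)
  also have "\<dots> = length (filter (\<lambda>x. a < x) w)" by (simp add: length_filter_conv_card)
  also have "card ?B = coinv w" unfolding coinv_def
    by (rule card_image) (auto simp: inj_on_def)
  finally show ?thesis unfolding coinv_def by simp
qed

lemma coinv_cv: "coinv w = cv w"
proof (induction w)
  case Nil then show ?case by (simp add: coinv_def)
next
  case (Cons a w) then show ?case by (simp add: coinv_Cons)
qed

fun merge :: "bool list \<Rightarrow> 'a \<Rightarrow> 'a list \<Rightarrow> 'a list" where
  "merge [] c xs = []"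
| "merge (b # bs) c xs = (if b then c # merge bs c xs else hd xs # merge bs c (tl xs))"

lemma merge_length[simp]: "length (merge bs c xs) = length bs"
  by (induction bs arbitrary: xs) auto

lemma merge_map: "c \<notin> set xs \<Longrightarrow> length xs = count_list bs False \<Longrightarrow>
   map (\<lambda>x. x = c) (merge bs c xs) = bs"
proof (induction bs arbitrary: xs)
  case (Cons b bs) then show ?case by (cases b; cases xs) (auto split: if_splits)
qed simp

lemma merge_filter: "c \<notin> set xs \<Longrightarrow> length xs = count_list bs False \<Longrightarrow>
   filter (\<lambda>x. x \<noteq> c) (merge bs c xs) = xs"
proof (induction bs arbitrary: xs)
  case (Cons b bs) then show ?case by (cases b; cases xs) (auto split: if_splits)
qed simp

lemma merge_inv: "merge (map (\<lambda>x. x = c) w) c (filter (\<lambda>x. x \<noteq> c) w) = w"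
  by (induction w) auto

lemma merge_set: "length xs = count_list bs False \<Longrightarrow> set (merge bs c xs) \<subseteq> insert c (set xs)"
proof (induction bs arbitrary: xs)
  case (Cons b bs)
  show ?case
  proof (cases b)
    case True then show ?thesis using Cons by auto
  next
    case False
    then obtain x xs' where "xs = x # xs'" using Cons.prems by (cases xs) auto
    then show ?thesis using Cons False by auto
  qed
qed simp

lemma merge_len_filter: "length xs = count_list bs False \<Longrightarrow>
   length (filter P (merge bs c xs)) = (if P c then count_list bs True else 0) + length (filter P xs)"
proof (induction bs arbitrary: xs)
  case (Cons b bs) then show ?case by (cases b; cases xs) (auto split: if_splits)
qed simp

fun fB :: "bool list \<Rightarrow> nat" where
  "fB [] = 0"
| "fB (b # bs) = (if b then 0 else count_list bs True) + fB bs"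

lemma count_map_Not: "count_list (map Not bs) True = count_list bs False"
  "count_list (map Not bs) False = count_list bs True"
  by (induction bs) auto

lemma count_TF: "count_list bs True + count_list bs False = length (bs::bool list)"
  by (induction bs) auto

lemma merge_cv_less: "length xs = count_list bs False \<Longrightarrow> \<forall>x\<in>set xs. x < c \<Longrightarrow>
   cv (merge bs c xs) = cv xs + fB bs"
proof (induction bs arbitrary: xs)
  case Nil then show ?case by simp
next
  case (Cons b bs)
  show ?case
  proof (cases b)
    case True
    have "set (merge bs c xs) \<subseteq> insert c (set xs)" using Cons.prems True by (intro merge_set) simp
    then have "\<forall>y\<in>set (merge bs c xs). \<not> c < y" using Cons.prems by fastforce
    then have "filter (\<lambda>x. c < x) (merge bs c xs) = []" by (simp add: filter_empty_conv)
    then show ?thesis using Cons True by simp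
  next
    case False
    then obtain x xs' where xs: "xs = x # xs'" using Cons.prems by (cases xs) auto
    have "length (filter (\<lambda>y. x < y) (merge bs c xs')) = count_list bs True + length (filter (\<lambda>y. x < y) xs')"
      using Cons.prems xs False by (subst merge_len_filter) auto
    then show ?thesis using Cons xs False by simp
  qed
qed

lemma merge_cv_greater: "length xs = count_list bs False \<Longrightarrow> \<forall>x\<in>set xs. c < x \<Longrightarrow>
   cv (merge bs c xs) = cv xs + fB (map Not bs)"
proof (induction bs arbitrary: xs)
  case Nil then show ?case by simp
next
  case (Cons b bs)
  show ?case
  proof (cases b)
    case True
    have "length (filter (\<lambda>y. c < y) (merge bs c xs)) = length (filter (\<lambda>y. c < y) xs)"
      using Cons.prems True by (subst merge_len_filter) auto
    also have "\<dots> = length xs" using Cons.prems by simp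
    finally show ?thesis using Cons True by (simp add: count_map_Not)
  next
    case False
    then obtain x xs' where xs: "xs = x # xs'" using Cons.prems by (cases xs) auto
    have "length (filter (\<lambda>y. x < y) (merge bs c xs')) = length (filter (\<lambda>y. x < y) xs')"
      using Cons.prems xs False by (subst merge_len_filter) auto
    then show ?thesis using Cons xs False by simp
  qed
qed

lemma fB_append: "fB (xs @ ys) = fB xs + fB ys + count_list xs False * count_list ys True"
  by (induction xs) (auto simp: algebra_simps)

lemma fB_replicate[simp]: "fB (replicate m b) = 0"
  by (induction m) auto

lemma count_replicate: "count_list (replicate m x) y = (if x = y then m else 0)"
  by (induction m) auto

lemma count_map_eq: "count_list (map (\<lambda>x. x = c) w) True = count_list w c"
  by (induction w) auto

lemma count_map_eq_F: "count_list (map (\<lambda>x. x = c) w) False = length (filter (\<lambda>x. x \<noteq> c) w)"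
  by (induction w) auto

lemma count_filter: "P a \<Longrightarrow> count_list (filter P w) a = count_list w a"
  by (induction w) auto

lemma length_filter_ne: "length (filter (\<lambda>x. x \<noteq> c) w) + count_list w c = length w"
  by (induction w) auto

lemma shape_exists: "True \<in> set bs \<Longrightarrow> \<exists>m zs. bs = replicate m False @ True # zs"
proof -
  assume "True \<in> set bs"
  then obtain ys zs where "bs = ys @ True # zs" "True \<notin> set ys" by (metis split_list_first)
  moreover have "ys = replicate (length ys) False" using \<open>True \<notin> set ys\<close> by (intro replicate_eqI) auto
  ultimately show ?thesis by metis
qed

lemma shape_least: "(LEAST t. t < length (replicate m False @ True # zs) \<and> (replicate m False @ True # zs) ! t) = m"
  by (rule Least_equality) (auto simp: nth_append nth_replicate split: if_splits)

lemma pn_mask: "pn n w = (LEAST t. t < length (map (\<lambda>x. x = n) w) \<and> map (\<lambda>x. x = n) w ! t) + 1"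
  unfolding pn_def by (rule arg_cong[where f = "\<lambda>x. x + 1"], rule arg_cong[where f = Least]) auto

lemma p1_mask: "p1 n w = (LEAST t. t < length (rev (map (\<lambda>x. x = 1) (filter (\<lambda>x. x \<noteq> n) w)))
    \<and> rev (map (\<lambda>x. x = 1) (filter (\<lambda>x. x \<noteq> n) w)) ! t) + 1"
  unfolding p1_def Let_def
  by (rule arg_cong[where f = "\<lambda>x. x + 1"], rule arg_cong[where f = Least]) (auto simp: rev_map)



lemma qint_Suc: "qint (Suc s) = qint s + qX ^ s"
  unfolding qint_def by simp

lemma qint_add: "qint (a + b) = qint a + qX ^ a * qint b"
  by (induction b) (auto simp: qint_Suc algebra_simps power_add qint_def)

lemma qfact_Suc: "qfact (Suc m) = qfact m * qint (Suc m)"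
  unfolding qfact_def by (simp add: prod.nat_ivl_Suc')

lemma poly_qint: "poly (qint s) 1 = of_nat s"
  unfolding qint_def qX_def by (simp add: poly_sum)

lemma qfact_nz: "qfact m \<noteq> 0"
proof -
  have "poly (qfact m) 1 = fact m"
    unfolding qfact_def by (simp add: poly_prod poly_qint fact_prod)
  then show ?thesis by (metis fact_nonzero of_nat_eq_0_iff poly_0 of_nat_fact)
qed

definition Bs :: "nat \<Rightarrow> nat \<Rightarrow> bool list set" where
  "Bs m k = {bs. length bs = m \<and> count_list bs True = k}"

definition Bq :: "nat \<Rightarrow> nat \<Rightarrow> int poly" where
  "Bq m k = (\<Sum>bs\<in>Bs m k. qX ^ fB bs)"

lemma Bs_finite: "finite (Bs m k)"
proof -
  have "finite {xs::bool list. set xs \<subseteq> UNIV \<and> length xs = m}" by (rule finite_lists_length_eq) simp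
  then show ?thesis by (rule finite_subset[rotated]) (auto simp: Bs_def)
qed

lemma Bs_0: "Bs 0 k = (if k = 0 then {[]} else {})"
  by (auto simp: Bs_def)

lemma Bs_Suc: "Bs (Suc m) k = (Cons True) ` (if k = 0 then {} else Bs m (k - 1)) \<union> (Cons False) ` Bs m k"
proof (rule set_eqI, rule iffI)
  fix bs assume "bs \<in> Bs (Suc m) k"
  then obtain b bs' where "bs = b # bs'" "length bs' = m" "count_list (b # bs') True = k"
    by (cases bs) (auto simp: Bs_def)
  then show "bs \<in> (Cons True) ` (if k = 0 then {} else Bs m (k - 1)) \<union> (Cons False) ` Bs m k"
    by (cases b) (auto simp: Bs_def)
qed (auto simp: Bs_def split: if_splits)

lemma Bq_Suc: "Bq (Suc m) k = (if k = 0 then 0 else Bq m (k - 1)) + qX ^ k * Bq m k"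
proof -
  have "Bq (Suc m) k = (\<Sum>bs\<in>(Cons True) ` (if k = 0 then {} else Bs m (k - 1)). qX ^ fB bs)
     + (\<Sum>bs\<in>(Cons False) ` Bs m k. qX ^ fB bs)"
    unfolding Bq_def Bs_Suc by (rule sum.union_disjoint) (auto simp: Bs_finite)
  also have "(\<Sum>bs\<in>(Cons True) ` (if k = 0 then {} else Bs m (k - 1)). qX ^ fB bs)
      = (if k = 0 then 0 else Bq m (k - 1))"
    by (cases "k = 0") (simp_all add: sum.reindex Bq_def)
  also have "(\<Sum>bs\<in>(Cons False) ` Bs m k. qX ^ fB bs) = (\<Sum>bs\<in>Bs m k. qX ^ (k + fB bs))"
    by (subst sum.reindex) (auto simp: Bs_def)
  also have "\<dots> = qX ^ k * Bq m k"
    by (simp add: Bq_def power_add sum_distrib_left)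
  finally show ?thesis .
qed

lemma Bq_big: "m < k \<Longrightarrow> Bq m k = 0"
proof -
  assume "m < k"
  then have "Bs m k = {}" unfolding Bs_def using count_le_length[of _ True] leD by blast
  then show ?thesis by (simp add: Bq_def)
qed

lemma Bq_fact: "k \<le> m \<Longrightarrow> Bq m k * qfact k * qfact (m - k) = qfact m"
proof (induction m arbitrary: k)
  case 0 then show ?case by (simp add: Bq_def Bs_0 qfact_def)
next
  case (Suc m)
  show ?case
  proof (cases k)
    case 0
    have B0: "Bq 0 0 = 1" by (simp add: Bq_def Bs_0)
    have "Bq m 0 = 1" for m by (induction m) (simp_all only: Bq_Suc B0, simp)
    then show ?thesis using 0 by (simp add: qfact_def)
  next
    case (Suc k')
    have T1: "Bq m k' * qfact k' * qfact (m - k') = qfact m" using Suc.IH Suc Suc.prems by simp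
    have T2: "qX ^ Suc k' * Bq m (Suc k') * qfact (Suc k') * qfact (m - k') = qX ^ Suc k' * qfact m * qint (m - k')"
    proof (cases "Suc k' \<le> m")
      case True
      then have "m - k' = Suc (m - Suc k')" by simp
      then have "qfact (m - k') = qfact (m - Suc k') * qint (m - k')" by (simp add: qfact_Suc)
      then show ?thesis using Suc.IH[OF True] by (simp add: mult.assoc mult.left_commute)
    next
      case False
      then show ?thesis using Bq_big[of m "Suc k'"] by (simp add: qint_def)
    qed
    have "Bq (Suc m) k * qfact k * qfact (Suc m - k)
        = Bq m k' * qfact k' * qfact (m - k') * qint (Suc k') + qX ^ Suc k' * Bq m (Suc k') * qfact (Suc k') * qfact (m - k')"
      using Suc by (simp add: Bq_Suc qfact_Suc) (simp add: algebra_simps)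
    also have "\<dots> = qfact m * (qint (Suc k') + qX ^ Suc k' * qint (m - k'))"
      unfolding T1 T2 by (simp add: distrib_left mult.assoc mult.left_commute)
    also have "qint (Suc k') + qX ^ Suc k' * qint (m - k') = qint (Suc m)"
      using Suc.prems Suc qint_add[of "Suc k'" "m - k'"] by simp
    finally show ?thesis by (simp add: qfact_Suc)
  qed
qed

lemma Bq_Not: "k \<le> m \<Longrightarrow> (\<Sum>bs\<in>Bs m k. qX ^ fB (map Not bs)) = Bq m (m - k)"
proof -
  assume km: "k \<le> m"
  have eq: "map Not ` Bs m k = Bs m (m - k)"
  proof (rule set_eqI, rule iffI)
    fix x assume "x \<in> map Not ` Bs m k"
    then show "x \<in> Bs m (m - k)" using count_TF[of x] count_map_Not
      by (auto simp: Bs_def)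
  next
    fix x assume x: "x \<in> Bs m (m - k)"
    have "x = map Not (map Not x)" by (simp add: comp_def)
    moreover have "map Not x \<in> Bs m k" using x km count_TF[of x] by (auto simp: Bs_def count_map_Not)
    ultimately show "x \<in> map Not ` Bs m k" by blast
  qed
  have inj: "inj_on (map Not) (Bs m k)"
  proof (rule inj_onI)
    fix x y :: "bool list" assume "map Not x = map Not y"
    then have "map Not (map Not x) = map Not (map Not y)" by simp
    then show "x = y" by (simp add: comp_def)
  qed
  have "Bq m (m - k) = (\<Sum>bs\<in>map Not ` Bs m k. qX ^ fB bs)" unfolding Bq_def eq ..
  also have "\<dots> = (\<Sum>bs\<in>Bs m k. qX ^ fB (map Not bs))" using inj by (simp add: sum.reindex)
  finally have "Bq m (m - k) = (\<Sum>bs\<in>Bs m k. qX ^ fB (map Not bs))" .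
  then show ?thesis by simp
qed

lemma merge_sum:
  assumes "\<forall>b\<in>BB. count_list b False = l" "\<forall>x\<in>X. length x = l \<and> c \<notin> set x"
  shows "(\<Sum>w\<in>{w. map (\<lambda>x. x = c) w \<in> BB \<and> filter (\<lambda>x. x \<noteq> c) w \<in> X}. g w)
       = (\<Sum>b\<in>BB. \<Sum>x\<in>X. g (merge b c x))"
proof -
  have img: "{w. map (\<lambda>x. x = c) w \<in> BB \<and> filter (\<lambda>x. x \<noteq> c) w \<in> X} = (\<lambda>(b, x). merge b c x) ` (BB \<times> X)"
  proof (rule set_eqI, rule iffI)
    fix w assume "w \<in> {w. map (\<lambda>x. x = c) w \<in> BB \<and> filter (\<lambda>x. x \<noteq> c) w \<in> X}"
    then show "w \<in> (\<lambda>(b, x). merge b c x) ` (BB \<times> X)"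
      by (auto intro!: image_eqI[where x = "(map (\<lambda>x. x = c) w, filter (\<lambda>x. x \<noteq> c) w)"] simp: merge_inv)
  next
    fix w assume "w \<in> (\<lambda>(b, x). merge b c x) ` (BB \<times> X)"
    then obtain b x where "w = merge b c x" "b \<in> BB" "x \<in> X" by auto
    then show "w \<in> {w. map (\<lambda>x. x = c) w \<in> BB \<and> filter (\<lambda>x. x \<noteq> c) w \<in> X}"
      using assms by (simp add: merge_map merge_filter)
  qed
  have inj: "inj_on (\<lambda>(b, x). merge b c x) (BB \<times> X)"
  proof (rule inj_onI, clarify)
    fix b x b' x' assume h: "b \<in> BB" "x \<in> X" "b' \<in> BB" "x' \<in> X" "merge b c x = merge b' c x'"
    have "b = map (\<lambda>y. y = c) (merge b c x)" "b' = map (\<lambda>y. y = c) (merge b' c x')"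
      "x = filter (\<lambda>y. y \<noteq> c) (merge b c x)" "x' = filter (\<lambda>y. y \<noteq> c) (merge b' c x')"
      using merge_map[of c x b] merge_map[of c x' b'] merge_filter[of c x b] merge_filter[of c x' b']
        h(1-4) assms by auto
    then show "b = b' \<and> x = x'" using h(5) by metis
  qed
  show ?thesis unfolding img sum.reindex[OF inj] sum.cartesian_product by (rule sum.cong) auto
qed



definition Um :: "nat \<Rightarrow> (nat \<Rightarrow> nat) \<Rightarrow> nat list set" where
  "Um m \<alpha> = {u. set u \<subseteq> {2..m} \<and> (\<forall>t\<in>{2..m}. count_list u t = \<alpha> t)}"

lemma Um_length: "u \<in> Um m \<alpha> \<Longrightarrow> length u = (\<Sum>t\<in>{2..m}. \<alpha> t)"
proof -
  assume u: "u \<in> Um m \<alpha>"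
  then have "length u = (\<Sum>t\<in>{2..m}. count_list u t)" using sum_count_set[of u "{2..m}"] by (simp add: Um_def)
  also have "\<dots> = (\<Sum>t\<in>{2..m}. \<alpha> t)" using u by (intro sum.cong) (auto simp: Um_def)
  finally show ?thesis .
qed

lemma Um_Suc:
  assumes "1 \<le> m"
  shows "Um (Suc m) \<alpha> = {w. map (\<lambda>x. x = Suc m) w \<in> Bs ((\<Sum>t\<in>{2..m}. \<alpha> t) + \<alpha> (Suc m)) (\<alpha> (Suc m))
          \<and> filter (\<lambda>x. x \<noteq> Suc m) w \<in> Um m \<alpha>}"
proof (rule set_eqI, rule iffI)
  have iv: "{2..Suc m} = insert (Suc m) {2..m}" using assms by auto
  fix w assume w: "w \<in> Um (Suc m) \<alpha>"
  have "length w = (\<Sum>t\<in>{2..Suc m}. \<alpha> t)" using Um_length[OF w] .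
  also have "\<dots> = (\<Sum>t\<in>{2..m}. \<alpha> t) + \<alpha> (Suc m)" unfolding iv by simp
  finally have l: "length w = (\<Sum>t\<in>{2..m}. \<alpha> t) + \<alpha> (Suc m)" .
  have c: "count_list w (Suc m) = \<alpha> (Suc m)" using w assms by (auto simp: Um_def)
  have "filter (\<lambda>x. x \<noteq> Suc m) w \<in> Um m \<alpha>"
    using w unfolding Um_def by (auto simp: count_filter)
  then show "w \<in> {w. map (\<lambda>x. x = Suc m) w \<in> Bs ((\<Sum>t\<in>{2..m}. \<alpha> t) + \<alpha> (Suc m)) (\<alpha> (Suc m))
          \<and> filter (\<lambda>x. x \<noteq> Suc m) w \<in> Um m \<alpha>}"
    using l c by (simp add: Bs_def count_map_eq)
next
  fix w assume w: "w \<in> {w. map (\<lambda>x. x = Suc m) w \<in> Bs ((\<Sum>t\<in>{2..m}. \<alpha> t) + \<alpha> (Suc m)) (\<alpha> (Suc m))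
          \<and> filter (\<lambda>x. x \<noteq> Suc m) w \<in> Um m \<alpha>}"
  then have c: "count_list w (Suc m) = \<alpha> (Suc m)" and f: "filter (\<lambda>x. x \<noteq> Suc m) w \<in> Um m \<alpha>"
    by (auto simp: Bs_def count_map_eq)
  have "set w \<subseteq> {2..Suc m}"
  proof
    fix x assume x: "x \<in> set w"
    show "x \<in> {2..Suc m}"
    proof (cases "x = Suc m")
      case True then show ?thesis using assms by simp
    next
      case False
      then have "x \<in> set (filter (\<lambda>x. x \<noteq> Suc m) w)" using x by simp
      then show ?thesis using f by (auto simp: Um_def)
    qed
  qed
  moreover have "\<forall>t\<in>{2..Suc m}. count_list w t = \<alpha> t"
  proof
    fix t assume t: "t \<in> {2..Suc m}"
    show "count_list w t = \<alpha> t"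
    proof (cases "t = Suc m")
      case True then show ?thesis using c by simp
    next
      case False
      then have "count_list w t = count_list (filter (\<lambda>x. x \<noteq> Suc m) w) t" by (simp add: count_filter)
      then show ?thesis using f t False by (auto simp: Um_def)
    qed
  qed
  ultimately show "w \<in> Um (Suc m) \<alpha>" by (simp add: Um_def)
qed

lemma Um_mult: "(\<Sum>u\<in>Um m \<alpha>. qX ^ cv u) * (\<Prod>t\<in>{2..m}. qfact (\<alpha> t)) = qfact (\<Sum>t\<in>{2..m}. \<alpha> t)"
proof (induction m)
  case 0
  have "Um 0 \<alpha> = {[]}" by (auto simp: Um_def)
  then show ?case by (simp add: qfact_def)
next
  case (Suc m)
  show ?case
  proof (cases "m = 0")
    case True
    have "Um (Suc m) \<alpha> = {[]}" using True by (auto simp: Um_def)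
    then show ?thesis using True by (simp add: qfact_def)
  next
    case False
    let ?l = "\<Sum>t\<in>{2..m}. \<alpha> t" and ?a = "\<alpha> (Suc m)"
    have iv: "{2..Suc m} = insert (Suc m) {2..m}" using False by auto
    have U: "Um (Suc m) \<alpha> = {w. map (\<lambda>x. x = Suc m) w \<in> Bs (?l + ?a) ?a
          \<and> filter (\<lambda>x. x \<noteq> Suc m) w \<in> Um m \<alpha>}" using False by (intro Um_Suc) simp
    have c1: "\<forall>b\<in>Bs (?l + ?a) ?a. count_list b False = ?l"
    proof
      fix b assume "b \<in> Bs (?l + ?a) ?a"
      then show "count_list b False = ?l" using count_TF[of b] by (simp add: Bs_def)
    qed
    have c2: "\<forall>x\<in>Um m \<alpha>. length x = ?l \<and> Suc m \<notin> set x"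
      using Um_length by (auto simp: Um_def)
    have "(\<Sum>u\<in>Um (Suc m) \<alpha>. qX ^ cv u) = (\<Sum>b\<in>Bs (?l + ?a) ?a. \<Sum>x\<in>Um m \<alpha>. qX ^ cv (merge b (Suc m) x))"
      unfolding U by (rule merge_sum[OF c1 c2])
    also have "\<dots> = (\<Sum>b\<in>Bs (?l + ?a) ?a. \<Sum>x\<in>Um m \<alpha>. qX ^ fB b * qX ^ cv x)"
    proof (intro sum.cong refl)
      fix b x assume b: "b \<in> Bs (?l + ?a) ?a" and x: "x \<in> Um m \<alpha>"
      have "cv (merge b (Suc m) x) = cv x + fB b"
        using c1 c2 b x by (intro merge_cv_less) (auto simp: Um_def)
      then show "qX ^ cv (merge b (Suc m) x) = qX ^ fB b * qX ^ cv x" by (simp add: power_add)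
    qed
    also have "\<dots> = Bq (?l + ?a) ?a * (\<Sum>u\<in>Um m \<alpha>. qX ^ cv u)"
      by (simp add: Bq_def sum_product)
    finally have S: "(\<Sum>u\<in>Um (Suc m) \<alpha>. qX ^ cv u) = Bq (?l + ?a) ?a * (\<Sum>u\<in>Um m \<alpha>. qX ^ cv u)" .
    have P: "(\<Prod>t\<in>{2..Suc m}. qfact (\<alpha> t)) = qfact ?a * (\<Prod>t\<in>{2..m}. qfact (\<alpha> t))"
      unfolding iv by simp
    have Q: "(\<Sum>t\<in>{2..Suc m}. \<alpha> t) = ?l + ?a" unfolding iv by simp
    have "(\<Sum>u\<in>Um (Suc m) \<alpha>. qX ^ cv u) * (\<Prod>t\<in>{2..Suc m}. qfact (\<alpha> t))
        = Bq (?l + ?a) ?a * qfact ?a * ((\<Sum>u\<in>Um m \<alpha>. qX ^ cv u) * (\<Prod>t\<in>{2..m}. qfact (\<alpha> t)))"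
      unfolding S P by (simp add: mult_ac)
    also have "\<dots> = Bq (?l + ?a) ?a * qfact ?a * qfact (?l + ?a - ?a)" using Suc.IH by simp
    also have "\<dots> = qfact (?l + ?a)" by (rule Bq_fact) simp
    finally show ?thesis unfolding Q .
  qed
qed

lemma qmult_main:
  assumes "n \<ge> 3"
  shows "qmultinomial (int (asum n \<alpha>)) (map (\<lambda>t. int (\<alpha> t)) [2..<n]) = (\<Sum>u\<in>Um (n - 1) \<alpha>. qX ^ cv u)"
proof -
  have iv: "{2..n-1} = set [2..<n]" using assms by auto
  have pr: "(\<Prod>b\<leftarrow>map (\<lambda>t. int (\<alpha> t)) [2..<n]. qfact (nat b)) = (\<Prod>t\<in>{2..n-1}. qfact (\<alpha> t))"
    unfolding iv by (subst prod.distinct_set_conv_list) (simp_all add: comp_def)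
  have nz: "(\<Prod>t\<in>{2..n-1}. qfact (\<alpha> t)) \<noteq> 0" by (simp add: qfact_nz)
  have "qmultinomial (int (asum n \<alpha>)) (map (\<lambda>t. int (\<alpha> t)) [2..<n])
      = qfact (asum n \<alpha>) div (\<Prod>t\<in>{2..n-1}. qfact (\<alpha> t))"
    unfolding qmultinomial_def pr by simp
  also have "\<dots> = (\<Sum>u\<in>Um (n - 1) \<alpha>. qX ^ cv u)"
    unfolding asum_def Um_mult[symmetric] using nz by simp
  finally show ?thesis .
qed



lemma Wset_D:
  assumes "w \<in> Wset n \<alpha> N k"
  shows "length w = N" "set w \<subseteq> {1..n}" "count_list w n = k" "count_list w 1 = (N - asum n \<alpha>) - k"
    "\<forall>i\<in>{2..n-1}. count_list w i = \<alpha> i"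
  using assms by (auto simp: Wset_def)

lemma gt_set:
  assumes n3: "n \<ge> 3" and AN: "asum n \<alpha> < N" and Ld: "L = N - asum n \<alpha>"
    and kL: "k \<le> L - 1" and i1: "1 \<le> i" and iA: "i \<le> asum n \<alpha> + 1"
  shows "{w \<in> Wgt n \<alpha> N k. p1 n w = i} =
    {w. map (\<lambda>x. x = n) w \<in> (\<lambda>b. replicate i False @ b) ` Bs (N - i) k \<and>
        filter (\<lambda>x. x \<noteq> n) w \<in> {v. map (\<lambda>x. x = 1) v \<in> (\<lambda>c. c @ True # replicate (i - 1) False) ` Bs (N - k - i) (L - k - 1)
           \<and> filter (\<lambda>x. x \<noteq> 1) v \<in> Um (n - 1) \<alpha>}}"
    (is "?T = ?R")
proof (rule set_eqI, rule iffI)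
  have L1: "L \<ge> 1" "k < L" using AN Ld kL by auto
  fix w assume w: "w \<in> ?T"
  then have wW: "w \<in> Wset n \<alpha> N k" and p1w: "p1 n w = i" and wg: "k = 0 \<or> (k \<noteq> L \<and> pn n w > p1 n w)"
    by (auto simp: Wgt_def Ld)
  note D = Wset_D[OF wW]
  define bn where "bn = map (\<lambda>x. x = n) w"
  define v where "v = filter (\<lambda>x. x \<noteq> n) w"
  define b1 where "b1 = map (\<lambda>x. x = 1) v"
  define u where "u = filter (\<lambda>x. x \<noteq> 1) v"
  have cvn: "count_list v t = count_list w t" if "t \<noteq> n" for t
    unfolding v_def using that by (simp add: count_filter)
  have cu: "count_list u t = count_list w t" if "t \<noteq> n" "t \<noteq> 1" for t
    unfolding u_def using that by (simp add: count_filter cvn)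
  have lv: "length v = N - k" using length_filter_ne[of n w] D unfolding v_def by simp
  have uU: "u \<in> Um (n - 1) \<alpha>"
    unfolding Um_def
  proof (intro CollectI conjI ballI subsetI)
    fix x assume "x \<in> set u"
    then have "x \<in> set w" "x \<noteq> n" "x \<noteq> 1" by (auto simp: u_def v_def)
    then have "x \<in> {1..n}" "x \<noteq> n" "x \<noteq> 1" using D(2) by blast+
    then show "x \<in> {2..n - 1}" by auto
  next
    fix t assume t: "t \<in> {2..n - 1}"
    then show "count_list u t = \<alpha> t" using cu[of t] D(5) n3 by auto
  qed
  have cv1: "count_list v 1 = L - k" using cvn[of 1] D(4) n3 Ld by simp
  have "True \<in> set (rev b1)"
  proof -
    have "count_list b1 True \<noteq> 0" using cv1 L1 by (simp add: b1_def count_map_eq)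
    then show ?thesis by (simp add: count_list_0_iff)
  qed
  then obtain m zs where rb: "rev b1 = replicate m False @ True # zs" using shape_exists by blast
  have "p1 n w = m + 1" unfolding p1_mask rev_map
    using shape_least[of m zs] rb by (simp add: b1_def v_def rev_map)
  then have mi: "m = i - 1" using p1w by simp
  have b1e: "b1 = rev zs @ True # replicate (i - 1) False"
    using arg_cong[OF rb, of rev] mi by simp
  have "b1 \<in> (\<lambda>c. c @ True # replicate (i - 1) False) ` Bs (N - k - i) (L - k - 1)"
  proof (rule image_eqI[where x = "rev zs"])
    show "b1 = rev zs @ True # replicate (i - 1) False" by (rule b1e)
    have "length b1 = N - k" using lv by (simp add: b1_def)
    moreover have "count_list b1 True = L - k" using cv1 by (simp add: b1_def count_map_eq)
    ultimately show "rev zs \<in> Bs (N - k - i) (L - k - 1)" using b1e i1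
      by (auto simp: Bs_def count_replicate)
  qed
  then have vV: "v \<in> {v. map (\<lambda>x. x = 1) v \<in> (\<lambda>c. c @ True # replicate (i - 1) False) ` Bs (N - k - i) (L - k - 1)
           \<and> filter (\<lambda>x. x \<noteq> 1) v \<in> Um (n - 1) \<alpha>}" using uU by (simp add: b1_def u_def)
  have lbn: "length bn = N" "count_list bn True = k" using D by (simp_all add: bn_def count_map_eq)
  have "take i bn = replicate i False"
  proof (cases "k = 0")
    case True
    then have "True \<notin> set bn" using lbn by (simp add: count_list_0_iff[symmetric])
    then have "\<forall>y\<in>set (take i bn). y = False" by (auto dest: in_set_takeD)
    then show ?thesis using lbn iA AN by (intro replicate_eqI) auto
  next
    case False
    then have "True \<in> set bn" using lbn by (metis count_list_0_iff)
    then obtain m' zs' where bs: "bn = replicate m' False @ True # zs'" using shape_exists by blast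
    have "pn n w = m' + 1" using shape_least[of m' zs'] bs unfolding pn_mask bn_def by simp
    then have "i \<le> m'" using wg False p1w by simp
    then show ?thesis using bs by (simp add: take_append min_def)
  qed
  then have "bn = replicate i False @ drop i bn" by (metis append_take_drop_id)
  moreover have "drop i bn \<in> Bs (N - i) k"
  proof -
    have "count_list bn True = count_list (take i bn) True + count_list (drop i bn) True"
      by (metis append_take_drop_id count_list_append)
    then show ?thesis using lbn \<open>take i bn = replicate i False\<close> by (simp add: Bs_def count_replicate)
  qed
  ultimately have "bn \<in> (\<lambda>b. replicate i False @ b) ` Bs (N - i) k" by blast
  then show "w \<in> ?R" using vV by (simp add: bn_def v_def)
next
  fix w assume w: "w \<in> ?R"
  have L1: "L \<ge> 1" "k < L" using AN Ld kL by auto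
  obtain b where bn: "map (\<lambda>x. x = n) w = replicate i False @ b" and b: "b \<in> Bs (N - i) k"
    using w by auto
  define v where "v = filter (\<lambda>x. x \<noteq> n) w"
  obtain c where b1: "map (\<lambda>x. x = 1) v = c @ True # replicate (i - 1) False"
    and c: "c \<in> Bs (N - k - i) (L - k - 1)" using w by (auto simp: v_def)
  define u where "u = filter (\<lambda>x. x \<noteq> 1) v"
  have uU: "u \<in> Um (n - 1) \<alpha>" using w by (simp add: u_def v_def)
  have cvn: "count_list v t = count_list w t" if "t \<noteq> n" for t
    unfolding v_def using that by (simp add: count_filter)
  have cu: "count_list u t = count_list v t" if "t \<noteq> 1" for t
    unfolding u_def using that by (simp add: count_filter)
  have lw: "length w = N"
  proof -
    have "length w = length (map (\<lambda>x. x = n) w)" by simp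
    also have "\<dots> = N" using bn b iA AN by (simp add: Bs_def)
    finally show ?thesis .
  qed
  have cwn: "count_list w n = k" using arg_cong[OF bn, of "\<lambda>l. count_list l True"] b
    by (simp add: count_map_eq count_replicate Bs_def)
  have cw1: "count_list w 1 = L - k"
  proof -
    have "count_list w 1 = count_list (map (\<lambda>x. x = 1) v) True" using cvn[of 1] n3 by (simp add: count_map_eq)
    also have "\<dots> = L - k" using b1 c L1 by (simp add: count_replicate Bs_def)
    finally show ?thesis .
  qed
  have setw: "set w \<subseteq> {1..n}"
  proof
    fix x assume x: "x \<in> set w"
    show "x \<in> {1..n}"
    proof (cases "x = n \<or> x = 1")
      case True then show ?thesis using n3 by auto
    next
      case False
      then have "x \<in> set u" using x by (simp add: u_def v_def)
      then have "x \<in> {2..n-1}" using uU by (auto simp: Um_def)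
      then show ?thesis by auto
    qed
  qed
  have cwt: "\<forall>t\<in>{2..n-1}. count_list w t = \<alpha> t"
  proof
    fix t assume t: "t \<in> {2..n-1}"
    then have "count_list w t = count_list u t" using cu[of t] cvn[of t] by auto
    then show "count_list w t = \<alpha> t" using uU t by (simp add: Um_def)
  qed
  have wW: "w \<in> Wset n \<alpha> N k" using lw setw cwn cw1 cwt Ld by (simp add: Wset_def)
  have rb: "rev (map (\<lambda>x. x = 1) v) = replicate (i - 1) False @ True # rev c" using b1 by simp
  have p1w: "p1 n w = i" unfolding p1_mask
    using shape_least[of "i - 1" "rev c"] rb i1 by (simp add: v_def)
  have cond: "k = 0 \<or> (k \<noteq> N - asum n \<alpha> \<and> pn n w > p1 n w)"
  proof (cases "k = 0")
    case False
    have "count_list b True = k" using b by (simp add: Bs_def)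
    then have "True \<in> set b" using False count_list_0_iff[of b True] by simp
    then obtain m zs where "b = replicate m False @ True # zs" using shape_exists by blast
    then have "map (\<lambda>x. x = n) w = replicate (i + m) False @ True # zs" using bn by (simp add: replicate_add)
    then have "pn n w = i + m + 1" unfolding pn_mask using shape_least[of "i + m" zs] by simp
    then show ?thesis using p1w L1 Ld by simp
  qed simp
  have "w \<in> Wgt n \<alpha> N k" unfolding Wgt_def using wW cond by blast
  then show "w \<in> ?T" using p1w by blast
qed


lemma le_set:
  assumes n3: "n \<ge> 3" and AN: "asum n \<alpha> < N" and Ld: "L = N - asum n \<alpha>"
    and k1: "1 \<le> k" and kL: "k \<le> L" and j1: "1 \<le> j" and jA: "j \<le> asum n \<alpha> + 1"
  shows "{w \<in> Wle n \<alpha> N k. pn n w = j} =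
    {w. map (\<lambda>x. x = n) w \<in> (\<lambda>b. replicate (j - 1) False @ True # b) ` Bs (N - j) (k - 1) \<and>
        filter (\<lambda>x. x \<noteq> n) w \<in> {v. map (\<lambda>x. x = 1) v \<in> (\<lambda>c. c @ replicate (j - 1) False) ` Bs (N - k - (j - 1)) (L - k)
           \<and> filter (\<lambda>x. x \<noteq> 1) v \<in> Um (n - 1) \<alpha>}}"
    (is "?T = ?R")
proof (rule set_eqI, rule iffI)
  fix w assume w: "w \<in> ?T"
  then have wW: "w \<in> Wset n \<alpha> N k" and pnw: "pn n w = j" and wg: "k = L \<or> (k \<noteq> 0 \<and> pn n w \<le> p1 n w)"
    by (auto simp: Wle_def Ld)
  note D = Wset_D[OF wW]
  define bn where "bn = map (\<lambda>x. x = n) w"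
  define v where "v = filter (\<lambda>x. x \<noteq> n) w"
  define b1 where "b1 = map (\<lambda>x. x = 1) v"
  define u where "u = filter (\<lambda>x. x \<noteq> 1) v"
  have cvn: "count_list v t = count_list w t" if "t \<noteq> n" for t
    unfolding v_def using that by (simp add: count_filter)
  have cu: "count_list u t = count_list w t" if "t \<noteq> n" "t \<noteq> 1" for t
    unfolding u_def using that by (simp add: count_filter cvn)
  have lv: "length v = N - k" using length_filter_ne[of n w] D unfolding v_def by simp
  have uU: "u \<in> Um (n - 1) \<alpha>"
    unfolding Um_def
  proof (intro CollectI conjI ballI subsetI)
    fix x assume "x \<in> set u"
    then have "x \<in> set w" "x \<noteq> n" "x \<noteq> 1" by (auto simp: u_def v_def)
    then have "x \<in> {1..n}" "x \<noteq> n" "x \<noteq> 1" using D(2) by blast+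
    then show "x \<in> {2..n - 1}" by auto
  next
    fix t assume t: "t \<in> {2..n - 1}"
    then show "count_list u t = \<alpha> t" using cu[of t] D(5) n3 by auto
  qed
  have cv1: "count_list v 1 = L - k" using cvn[of 1] D(4) n3 Ld by simp
  have cb1: "count_list b1 True = L - k" using cv1 by (simp add: b1_def count_map_eq)
  have lb1: "length b1 = N - k" using lv by (simp add: b1_def)
  have tk: "take (j - 1) (rev b1) = replicate (j - 1) False"
  proof (cases "k = L")
    case True
    then have "True \<notin> set (rev b1)" using cb1 by (simp add: count_list_0_iff[symmetric])
    then have "\<forall>y\<in>set (take (j - 1) (rev b1)). y = False" by (auto dest: in_set_takeD)
    moreover have "j - 1 \<le> length (rev b1)" using lb1 jA Ld kL AN by simp
    ultimately show ?thesis by (intro replicate_eqI) auto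
  next
    case False
    then have "count_list (rev b1) True \<noteq> 0" using cb1 kL by simp
    then have "True \<in> set (rev b1)" using count_list_0_iff by metis
    then obtain m zs where rb: "rev b1 = replicate m False @ True # zs" using shape_exists by blast
    have "p1 n w = m + 1" unfolding p1_mask
      using shape_least[of m zs] rb by (simp add: b1_def v_def rev_map)
    then have "j - 1 \<le> m" using wg False pnw by linarith
    then show ?thesis using rb by (simp add: take_append min_def)
  qed
  define c where "c = rev (drop (j - 1) (rev b1))"
  have b1e: "b1 = c @ replicate (j - 1) False"
  proof -
    have "rev b1 = replicate (j - 1) False @ drop (j - 1) (rev b1)" using tk by (metis append_take_drop_id)
    then have "rev (rev b1) = rev (replicate (j - 1) False @ drop (j - 1) (rev b1))" by simp
    then show ?thesis by (simp add: c_def)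
  qed
  have "b1 \<in> (\<lambda>c. c @ replicate (j - 1) False) ` Bs (N - k - (j - 1)) (L - k)"
  proof (rule image_eqI[where x = c])
    show "b1 = c @ replicate (j - 1) False" by (rule b1e)
    have "length c = N - k - (j - 1)" using lb1 jA Ld kL AN j1 by (simp add: c_def)
    moreover have "count_list c True = L - k" using cb1 b1e by (simp add: count_replicate)
    ultimately show "c \<in> Bs (N - k - (j - 1)) (L - k)" by (simp add: Bs_def)
  qed
  then have vV: "v \<in> {v. map (\<lambda>x. x = 1) v \<in> (\<lambda>c. c @ replicate (j - 1) False) ` Bs (N - k - (j - 1)) (L - k)
           \<and> filter (\<lambda>x. x \<noteq> 1) v \<in> Um (n - 1) \<alpha>}" using uU by (simp add: b1_def u_def)
  have lbn: "length bn = N" "count_list bn True = k" using D by (simp_all add: bn_def count_map_eq)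
  have "True \<in> set bn" using lbn k1 count_list_0_iff[of bn True] by simp
  then obtain m zs where bs: "bn = replicate m False @ True # zs" using shape_exists by blast
  have "pn n w = m + 1" using shape_least[of m zs] bs unfolding pn_mask bn_def by simp
  then have mj: "m = j - 1" using pnw by simp
  have "zs \<in> Bs (N - j) (k - 1)" using lbn bs mj j1 by (simp add: Bs_def count_replicate) linarith
  then have "bn \<in> (\<lambda>b. replicate (j - 1) False @ True # b) ` Bs (N - j) (k - 1)" using bs mj by blast
  then show "w \<in> ?R" using vV by (simp add: bn_def v_def)
next
  fix w assume w: "w \<in> ?R"
  obtain b where bn: "map (\<lambda>x. x = n) w = replicate (j - 1) False @ True # b" and b: "b \<in> Bs (N - j) (k - 1)"
    using w by auto
  define v where "v = filter (\<lambda>x. x \<noteq> n) w"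
  obtain c where b1: "map (\<lambda>x. x = 1) v = c @ replicate (j - 1) False"
    and c: "c \<in> Bs (N - k - (j - 1)) (L - k)" using w by (auto simp: v_def)
  define u where "u = filter (\<lambda>x. x \<noteq> 1) v"
  have uU: "u \<in> Um (n - 1) \<alpha>" using w by (simp add: u_def v_def)
  have cvn: "count_list v t = count_list w t" if "t \<noteq> n" for t
    unfolding v_def using that by (simp add: count_filter)
  have cu: "count_list u t = count_list v t" if "t \<noteq> 1" for t
    unfolding u_def using that by (simp add: count_filter)
  have lw: "length w = N"
  proof -
    have "length w = length (map (\<lambda>x. x = n) w)" by simp
    also have "\<dots> = N" using bn b jA AN j1 by (simp add: Bs_def)
    finally show ?thesis .
  qed
  have cwn: "count_list w n = k" using arg_cong[OF bn, of "\<lambda>l. count_list l True"] b k1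
    by (simp add: count_map_eq count_replicate Bs_def)
  have cw1: "count_list w 1 = L - k"
  proof -
    have "count_list w 1 = count_list (map (\<lambda>x. x = 1) v) True" using cvn[of 1] n3 by (simp add: count_map_eq)
    also have "\<dots> = L - k" using b1 c by (simp add: count_replicate Bs_def)
    finally show ?thesis .
  qed
  have setw: "set w \<subseteq> {1..n}"
  proof
    fix x assume x: "x \<in> set w"
    show "x \<in> {1..n}"
    proof (cases "x = n \<or> x = 1")
      case True then show ?thesis using n3 by auto
    next
      case False
      then have "x \<in> set u" using x by (simp add: u_def v_def)
      then have "x \<in> {2..n-1}" using uU by (auto simp: Um_def)
      then show ?thesis by auto
    qed
  qed
  have cwt: "\<forall>t\<in>{2..n-1}. count_list w t = \<alpha> t"
  proof
    fix t assume t: "t \<in> {2..n-1}"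
    then have "count_list w t = count_list u t" using cu[of t] cvn[of t] by auto
    then show "count_list w t = \<alpha> t" using uU t by (simp add: Um_def)
  qed
  have wW: "w \<in> Wset n \<alpha> N k" using lw setw cwn cw1 cwt Ld by (simp add: Wset_def)
  have pnw: "pn n w = j" unfolding pn_mask
    using shape_least[of "j - 1" b] bn j1 by simp
  have cond: "k = N - asum n \<alpha> \<or> (k \<noteq> 0 \<and> pn n w \<le> p1 n w)"
  proof (cases "k = L")
    case False
    have "count_list (rev c) True = L - k" using c by (simp add: Bs_def)
    then have "True \<in> set (rev c)" using False kL count_list_0_iff[of "rev c" True] by simp
    then obtain m zs where "rev c = replicate m False @ True # zs" using shape_exists by blast
    then have "rev (map (\<lambda>x. x = 1) v) = replicate (j - 1 + m) False @ True # zs" using b1 by (simp add: replicate_add)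
    then have "p1 n w = j - 1 + m + 1" unfolding p1_mask using shape_least[of "j - 1 + m" zs]
      by (simp add: v_def)
    then show ?thesis using pnw k1 by linarith
  qed (simp add: Ld)
  have "w \<in> Wle n \<alpha> N k" unfolding Wle_def using wW cond by blast
  then show "w \<in> ?T" using pnw by blast
qed



lemma two_level_sum:
  assumes T: "T = {w. map (\<lambda>x. x = n) w \<in> BBn \<and> filter (\<lambda>x. x \<noteq> n) w \<in>
      {v. map (\<lambda>x. x = 1) v \<in> BB1 \<and> filter (\<lambda>x. x \<noteq> 1) v \<in> Um (n - 1) \<alpha>}}"
    and n3: "n \<ge> 3"
    and h1: "\<forall>b\<in>BBn. count_list b False = ll"
    and h2: "\<forall>b\<in>BB1. length b = ll \<and> count_list b False = asum n \<alpha>"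
  shows "(\<Sum>w\<in>T. qX ^ cv w) = (\<Sum>b\<in>BBn. qX ^ fB b) * (\<Sum>b\<in>BB1. qX ^ fB (map Not b)) *
     (\<Sum>u\<in>Um (n - 1) \<alpha>. qX ^ cv u)"
proof -
  let ?V = "{v. map (\<lambda>x. x = 1) v \<in> BB1 \<and> filter (\<lambda>x. x \<noteq> 1) v \<in> Um (n - 1) \<alpha>}"
  have Vset: "\<forall>x\<in>set v. x < n" if "v \<in> ?V" for v
  proof
    fix x assume x: "x \<in> set v"
    show "x < n"
    proof (cases "x = 1")
      case True then show ?thesis using n3 by simp
    next
      case False
      then have "x \<in> set (filter (\<lambda>x. x \<noteq> 1) v)" using x by simp
      then have "x \<in> {2..n - 1}" using that by (auto simp: Um_def)
      then show ?thesis using n3 by auto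
    qed
  qed
  have hV: "\<forall>v\<in>?V. length v = ll \<and> n \<notin> set v"
  proof
    fix v assume v: "v \<in> ?V"
    then have "length (map (\<lambda>x. x = 1) v) = ll" using h2 by blast
    then show "length v = ll \<and> n \<notin> set v" using Vset[OF v] by auto
  qed
  have "(\<Sum>w\<in>T. qX ^ cv w) = (\<Sum>b\<in>BBn. \<Sum>v\<in>?V. qX ^ cv (merge b n v))"
    unfolding T by (rule merge_sum[OF h1 hV])
  also have "\<dots> = (\<Sum>b\<in>BBn. \<Sum>v\<in>?V. qX ^ fB b * qX ^ cv v)"
  proof (intro sum.cong refl)
    fix b v assume b: "b \<in> BBn" and v: "v \<in> ?V"
    have "cv (merge b n v) = cv v + fB b" using h1 hV b v Vset[OF v] by (intro merge_cv_less) auto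
    then show "qX ^ cv (merge b n v) = qX ^ fB b * qX ^ cv v" by (simp add: power_add)
  qed
  also have "\<dots> = (\<Sum>b\<in>BBn. qX ^ fB b) * (\<Sum>v\<in>?V. qX ^ cv v)" by (simp add: sum_product)
  also have "(\<Sum>v\<in>?V. qX ^ cv v) = (\<Sum>b\<in>BB1. \<Sum>u\<in>Um (n - 1) \<alpha>. qX ^ cv (merge b 1 u))"
  proof (rule merge_sum)
    show "\<forall>b\<in>BB1. count_list b False = asum n \<alpha>" using h2 by blast
    show "\<forall>x\<in>Um (n - 1) \<alpha>. length x = asum n \<alpha> \<and> 1 \<notin> set x"
      using Um_length by (auto simp: Um_def asum_def)
  qed
  also have "\<dots> = (\<Sum>b\<in>BB1. \<Sum>u\<in>Um (n - 1) \<alpha>. qX ^ fB (map Not b) * qX ^ cv u)"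
  proof (intro sum.cong refl)
    fix b u assume b: "b \<in> BB1" and u: "u \<in> Um (n - 1) \<alpha>"
    have "cv (merge b 1 u) = cv u + fB (map Not b)"
      using h2 b u Um_length[OF u] by (intro merge_cv_greater) (auto simp: Um_def asum_def)
    then show "qX ^ cv (merge b 1 u) = qX ^ fB (map Not b) * qX ^ cv u" by (simp add: power_add)
  qed
  also have "\<dots> = (\<Sum>b\<in>BB1. qX ^ fB (map Not b)) * (\<Sum>u\<in>Um (n - 1) \<alpha>. qX ^ cv u)"
    by (simp add: sum_product)
  finally show ?thesis by (simp add: mult.assoc)
qed

lemma img_sum1: "(\<Sum>b\<in>(\<lambda>b. replicate p False @ b) ` Bs M r. qX ^ fB b) = qX ^ (p * r) * Bq M r"
proof -
  have inj: "inj_on (\<lambda>b. replicate p False @ b) (Bs M r)" by (rule inj_onI) simp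
  have "(\<Sum>b\<in>(\<lambda>b. replicate p False @ b) ` Bs M r. qX ^ fB b) = (\<Sum>b\<in>Bs M r. qX ^ fB (replicate p False @ b))"
    using inj by (simp add: sum.reindex)
  also have "\<dots> = (\<Sum>b\<in>Bs M r. qX ^ (p * r) * qX ^ fB b)"
    by (intro sum.cong refl) (auto simp: fB_append count_replicate Bs_def power_add)
  finally show ?thesis by (simp add: Bq_def sum_distrib_left)
qed

lemma img_sum3: "(\<Sum>b\<in>(\<lambda>b. replicate p False @ True # b) ` Bs M r. qX ^ fB b) = qX ^ (p * (r + 1)) * Bq M r"
proof -
  have inj: "inj_on (\<lambda>b. replicate p False @ True # b) (Bs M r)" by (rule inj_onI) simp
  have "(\<Sum>b\<in>(\<lambda>b. replicate p False @ True # b) ` Bs M r. qX ^ fB b) = (\<Sum>b\<in>Bs M r. qX ^ fB (replicate p False @ True # b))"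
    using inj by (simp add: sum.reindex)
  also have "\<dots> = (\<Sum>b\<in>Bs M r. qX ^ (p * (r + 1)) * qX ^ fB b)"
    by (intro sum.cong refl) (auto simp: fB_append count_replicate Bs_def power_add)
  finally show ?thesis by (simp add: Bq_def sum_distrib_left)
qed

lemma img_sum2: "r \<le> M \<Longrightarrow> (\<Sum>b\<in>(\<lambda>c. c @ True # replicate p False) ` Bs M r. qX ^ fB (map Not b))
   = qX ^ ((r + 1) * p) * Bq M (M - r)"
proof -
  assume rM: "r \<le> M"
  have inj: "inj_on (\<lambda>c. c @ True # replicate p False) (Bs M r)" by (rule inj_onI) simp
  have "(\<Sum>b\<in>(\<lambda>c. c @ True # replicate p False) ` Bs M r. qX ^ fB (map Not b))
      = (\<Sum>b\<in>Bs M r. qX ^ fB (map Not (b @ True # replicate p False)))"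
    using inj by (simp add: sum.reindex)
  also have "\<dots> = (\<Sum>b\<in>Bs M r. qX ^ ((r + 1) * p) * qX ^ fB (map Not b))"
    by (intro sum.cong refl) (auto simp: fB_append count_replicate Bs_def power_add count_map_Not algebra_simps)
  finally show ?thesis using rM by (simp add: Bq_Not sum_distrib_left[symmetric])
qed

lemma img_sum4: "r \<le> M \<Longrightarrow> (\<Sum>b\<in>(\<lambda>c. c @ replicate p False) ` Bs M r. qX ^ fB (map Not b))
   = qX ^ (r * p) * Bq M (M - r)"
proof -
  assume rM: "r \<le> M"
  have inj: "inj_on (\<lambda>c. c @ replicate p False) (Bs M r)" by (rule inj_onI) simp
  have "(\<Sum>b\<in>(\<lambda>c. c @ replicate p False) ` Bs M r. qX ^ fB (map Not b))
      = (\<Sum>b\<in>Bs M r. qX ^ fB (map Not (b @ replicate p False)))"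
    using inj by (simp add: sum.reindex)
  also have "\<dots> = (\<Sum>b\<in>Bs M r. qX ^ (r * p) * qX ^ fB (map Not b))"
    by (intro sum.cong refl) (auto simp: fB_append count_replicate Bs_def power_add count_map_Not algebra_simps)
  finally show ?thesis using rM by (simp add: Bq_Not sum_distrib_left[symmetric])
qed



lemma trinom:
  assumes "a + b + c = m"
  shows "qmultinomial (int m) [int a, int b, int c] = Bq m a * Bq (m - a) b"
proof -
  have e1: "Bq m a * qfact a * qfact (m - a) = qfact m" using assms by (intro Bq_fact) simp
  have e2: "Bq (m - a) b * qfact b * qfact c = qfact (m - a)"
  proof -
    have "m - a - b = c" "b \<le> m - a" using assms by auto
    then show ?thesis using Bq_fact[of b "m - a"] by simp
  qed
  have "Bq m a * Bq (m - a) b * (qfact a * (qfact b * qfact c)) = qfact m"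
    using e1 e2 by (simp add: mult_ac)
  then have X: "qfact m = Bq m a * Bq (m - a) b * (qfact a * (qfact b * qfact c))" by simp
  have nz: "qfact a * (qfact b * qfact c) \<noteq> 0" by (simp add: qfact_nz)
  have "qmultinomial (int m) [int a, int b, int c] = qfact m div (qfact a * (qfact b * qfact c))"
    unfolding qmultinomial_def by simp
  also have "\<dots> = Bq m a * Bq (m - a) b" unfolding X using nz by (rule nonzero_mult_div_cancel_right)
  finally show ?thesis .
qed

lemma choose2_Suc: "(Suc k choose 2) = (k choose 2) + k"
  using binomial_Suc_Suc[of k 1] by (simp add: numeral_2_eq_2)

theorem mainTheorem18:
  fixes n N ell :: nat and \<alpha> :: "nat \<Rightarrow> nat"
  assumes "n \<ge> 3"
    and "\<forall>i\<in>{2..n-1}. \<alpha> i > 0"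
    and "N > asum n \<alpha>"
    and "2 \<le> ell" and "ell \<le> n"
  defines "L \<equiv> N - asum n \<alpha>"
  shows "(\<forall>k i. k \<le> L - 1 \<and> 1 \<le> i \<and> i \<le> N - L + 1 \<longrightarrow>
           (\<Sum>w\<in>{w \<in> Wgt n \<alpha> N k. p1 n w = i}. qX ^ quinv' n \<alpha> ell k w) =
           qX ^ ((\<Sum>t=ell..n-1. \<alpha> t choose 2) + ((k + 1) choose 2) + (i - 1) * L) *
           qmultinomial (int N - int L) (map (\<lambda>t. int (\<alpha> t)) [2..<n]) *
           qmultinomial (int N - int i) [int k, int N - int L - int i + 1, int L - int k - 1])
       \<and> (\<forall>k j. 1 \<le> k \<and> k \<le> L \<and> 1 \<le> j \<and> j \<le> N - L + 1 \<longrightarrow>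
           (\<Sum>w\<in>{w \<in> Wle n \<alpha> N k. pn n w = j}. qX ^ quinv' n \<alpha> ell k w) =
           qX ^ ((\<Sum>t=ell..n-1. \<alpha> t choose 2) + (k choose 2) + (j - 1) * L) *
           qmultinomial (int N - int L) (map (\<lambda>t. int (\<alpha> t)) [2..<n]) *
           qmultinomial (int N - int j) [int k - 1, int N - int L - int j + 1, int L - int k])"
proof -
  define A where "A = asum n \<alpha>"
  define base where "base = (\<Sum>t=ell..n-1. \<alpha> t choose 2)"
  define SU where "SU = (\<Sum>u\<in>Um (n - 1) \<alpha>. qX ^ cv u)"
  have n3: "n \<ge> 3" and AN: "A < N" and Ld: "L = N - A" using assms by (auto simp: A_def L_def)
  have NL: "N - L = A" "int N - int L = int A" using AN Ld by auto
  have M: "qmultinomial (int N - int L) (map (\<lambda>t. int (\<alpha> t)) [2..<n]) = SU"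
    unfolding NL(2) A_def SU_def by (rule qmult_main[OF n3])
  have Q: "(\<Sum>w\<in>S. qX ^ quinv' n \<alpha> ell k w) = qX ^ (base + (k choose 2)) * (\<Sum>w\<in>S. qX ^ cv w)" for S k
  proof -
    have "(\<Sum>w\<in>S. qX ^ quinv' n \<alpha> ell k w) = (\<Sum>w\<in>S. qX ^ (base + (k choose 2)) * qX ^ cv w)"
      by (intro sum.cong refl) (simp add: quinv'_def coinv_cv base_def power_add mult_ac)
    then show ?thesis by (simp add: sum_distrib_left)
  qed
  show ?thesis
  proof (intro conjI allI impI)
    fix k i assume ki: "k \<le> L - 1 \<and> 1 \<le> i \<and> i \<le> N - L + 1"
    then have k: "k \<le> L - 1" "k < L" and i: "1 \<le> i" "i \<le> A + 1" using NL AN Ld by auto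
    let ?T = "{w \<in> Wgt n \<alpha> N k. p1 n w = i}"
    have TS: "?T = {w. map (\<lambda>x. x = n) w \<in> (\<lambda>b. replicate i False @ b) ` Bs (N - i) k \<and>
        filter (\<lambda>x. x \<noteq> n) w \<in> {v. map (\<lambda>x. x = 1) v \<in> (\<lambda>c. c @ True # replicate (i - 1) False) ` Bs (N - k - i) (L - k - 1)
           \<and> filter (\<lambda>x. x \<noteq> 1) v \<in> Um (n - 1) \<alpha>}}"
      by (rule gt_set[OF n3 AN[unfolded A_def] Ld[unfolded A_def] k(1) i(1) i(2)[unfolded A_def]])
    have "(\<Sum>w\<in>?T. qX ^ cv w) = (\<Sum>b\<in>(\<lambda>b. replicate i False @ b) ` Bs (N - i) k. qX ^ fB b) *
        (\<Sum>b\<in>(\<lambda>c. c @ True # replicate (i - 1) False) ` Bs (N - k - i) (L - k - 1). qX ^ fB (map Not b)) * SU"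
      unfolding SU_def
    proof (rule two_level_sum[where ll = "N - k", OF TS n3])
      show "\<forall>b\<in>(\<lambda>b. replicate i False @ b) ` Bs (N - i) k. count_list b False = N - k"
      proof
        fix b assume "b \<in> (\<lambda>b. replicate i False @ b) ` Bs (N - i) k"
        then obtain c where "b = replicate i False @ c" "c \<in> Bs (N - i) k" by auto
        then show "count_list b False = N - k" using count_TF[of c] k i AN Ld
          by (simp add: Bs_def count_replicate)
      qed
      show "\<forall>b\<in>(\<lambda>c. c @ True # replicate (i - 1) False) ` Bs (N - k - i) (L - k - 1).
          length b = N - k \<and> count_list b False = asum n \<alpha>"
      proof
        fix b assume "b \<in> (\<lambda>c. c @ True # replicate (i - 1) False) ` Bs (N - k - i) (L - k - 1)"
        then obtain c where "b = c @ True # replicate (i - 1) False" "c \<in> Bs (N - k - i) (L - k - 1)" by auto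
        then show "length b = N - k \<and> count_list b False = asum n \<alpha>" using count_TF[of c] k i AN Ld
          by (simp add: Bs_def count_replicate A_def)
      qed
    qed
    also have "\<dots> = qX ^ (i * k) * Bq (N - i) k * (qX ^ ((L - k - 1 + 1) * (i - 1)) * Bq (N - k - i) (N - k - i - (L - k - 1))) * SU"
    proof -
      have rM: "L - k - 1 \<le> N - k - i" using k i AN Ld by linarith
      show ?thesis by (simp only: img_sum1 img_sum2[OF rM])
    qed
    finally have S: "(\<Sum>w\<in>?T. qX ^ cv w) = qX ^ (i * k + (L - k) * (i - 1)) * (Bq (N - i) k * Bq (N - i - k) (A + 1 - i)) * SU"
    proof -
      assume h: "(\<Sum>w\<in>?T. qX ^ cv w) = qX ^ (i * k) * Bq (N - i) k * (qX ^ ((L - k - 1 + 1) * (i - 1)) * Bq (N - k - i) (N - k - i - (L - k - 1))) * SU"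
      have e: "L - k - 1 + 1 = L - k" "N - k - i = N - i - k" "N - k - i - (L - k - 1) = A + 1 - i" using k i AN Ld by auto
      show ?thesis using h unfolding e(3) unfolding e(1) e(2) by (simp only: power_add mult_ac)
    qed
    have T3: "qmultinomial (int N - int i) [int k, int N - int L - int i + 1, int L - int k - 1] = Bq (N - i) k * Bq (N - i - k) (A + 1 - i)"
    proof -
      have "int N - int i = int (N - i)" "int N - int L - int i + 1 = int (A + 1 - i)" "int L - int k - 1 = int (L - k - 1)"
        using k i AN Ld by auto
      moreover have "k + (A + 1 - i) + (L - k - 1) = N - i" using k i AN Ld by auto
      ultimately show ?thesis by (simp only: trinom)
    qed
    have E: "i * k + (L - k) * (i - 1) + (k choose 2) = ((k + 1) choose 2) + (i - 1) * L"
    proof -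
      obtain i' where "i = Suc i'" using i by (cases i) auto
      moreover have "\<exists>r. L = k + r" using k by presburger
      then obtain r where "L = k + r" by blast
      ultimately show ?thesis by (simp add: choose2_Suc algebra_simps)
    qed
    show "(\<Sum>w\<in>?T. qX ^ quinv' n \<alpha> ell k w) =
           qX ^ ((\<Sum>t=ell..n-1. \<alpha> t choose 2) + ((k + 1) choose 2) + (i - 1) * L) *
           qmultinomial (int N - int L) (map (\<lambda>t. int (\<alpha> t)) [2..<n]) *
           qmultinomial (int N - int i) [int k, int N - int L - int i + 1, int L - int k - 1]"
    proof -
      have "(\<Sum>w\<in>?T. qX ^ quinv' n \<alpha> ell k w) = qX ^ (base + (k choose 2) + (i * k + (L - k) * (i - 1))) * (Bq (N - i) k * Bq (N - i - k) (A + 1 - i)) * SU"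
        unfolding Q S by (simp only: power_add mult_ac)
      also have "base + (k choose 2) + (i * k + (L - k) * (i - 1)) = base + (((k + 1) choose 2) + (i - 1) * L)" using E by linarith
      finally show ?thesis unfolding M T3 base_def by (simp only: mult_ac add_ac)
    qed
  next
    fix k j assume kj: "1 \<le> k \<and> k \<le> L \<and> 1 \<le> j \<and> j \<le> N - L + 1"
    then have k: "1 \<le> k" "k \<le> L" and j: "1 \<le> j" "j \<le> A + 1" using NL by auto
    let ?T = "{w \<in> Wle n \<alpha> N k. pn n w = j}"
    have TS: "?T = {w. map (\<lambda>x. x = n) w \<in> (\<lambda>b. replicate (j - 1) False @ True # b) ` Bs (N - j) (k - 1) \<and>
        filter (\<lambda>x. x \<noteq> n) w \<in> {v. map (\<lambda>x. x = 1) v \<in> (\<lambda>c. c @ replicate (j - 1) False) ` Bs (N - k - (j - 1)) (L - k)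
           \<and> filter (\<lambda>x. x \<noteq> 1) v \<in> Um (n - 1) \<alpha>}}"
      by (rule le_set[OF n3 AN[unfolded A_def] Ld[unfolded A_def] k(1) k(2) j(1) j(2)[unfolded A_def]])
    have "(\<Sum>w\<in>?T. qX ^ cv w) = (\<Sum>b\<in>(\<lambda>b. replicate (j - 1) False @ True # b) ` Bs (N - j) (k - 1). qX ^ fB b) *
        (\<Sum>b\<in>(\<lambda>c. c @ replicate (j - 1) False) ` Bs (N - k - (j - 1)) (L - k). qX ^ fB (map Not b)) * SU"
      unfolding SU_def
    proof (rule two_level_sum[where ll = "N - k", OF TS n3])
      show "\<forall>b\<in>(\<lambda>b. replicate (j - 1) False @ True # b) ` Bs (N - j) (k - 1). count_list b False = N - k"
      proof
        fix b assume "b \<in> (\<lambda>b. replicate (j - 1) False @ True # b) ` Bs (N - j) (k - 1)"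
        then obtain c where "b = replicate (j - 1) False @ True # c" "c \<in> Bs (N - j) (k - 1)" by auto
        then show "count_list b False = N - k" using count_TF[of c] k j AN Ld
          by (simp add: Bs_def count_replicate)
      qed
      show "\<forall>b\<in>(\<lambda>c. c @ replicate (j - 1) False) ` Bs (N - k - (j - 1)) (L - k).
          length b = N - k \<and> count_list b False = asum n \<alpha>"
      proof
        fix b assume "b \<in> (\<lambda>c. c @ replicate (j - 1) False) ` Bs (N - k - (j - 1)) (L - k)"
        then obtain c where "b = c @ replicate (j - 1) False" "c \<in> Bs (N - k - (j - 1)) (L - k)" by auto
        then show "length b = N - k \<and> count_list b False = asum n \<alpha>" using count_TF[of c] k j AN Ld
          by (simp add: Bs_def count_replicate A_def)
      qed
    qed
    also have "\<dots> = qX ^ ((j - 1) * (k - 1 + 1)) * Bq (N - j) (k - 1) * (qX ^ ((L - k) * (j - 1)) * Bq (N - k - (j - 1)) (N - k - (j - 1) - (L - k))) * SU"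
    proof -
      have rM: "L - k \<le> N - k - (j - 1)" using k j AN Ld by linarith
      show ?thesis by (simp only: img_sum3 img_sum4[OF rM])
    qed
    finally have S: "(\<Sum>w\<in>?T. qX ^ cv w) = qX ^ ((j - 1) * k + (L - k) * (j - 1)) * (Bq (N - j) (k - 1) * Bq (N - j - (k - 1)) (A + 1 - j)) * SU"
    proof -
      assume h: "(\<Sum>w\<in>?T. qX ^ cv w) = qX ^ ((j - 1) * (k - 1 + 1)) * Bq (N - j) (k - 1) * (qX ^ ((L - k) * (j - 1)) * Bq (N - k - (j - 1)) (N - k - (j - 1) - (L - k))) * SU"
      have e: "k - 1 + 1 = k" "N - k - (j - 1) = N - j - (k - 1)" "N - k - (j - 1) - (L - k) = A + 1 - j" using k j AN Ld by auto
      show ?thesis using h unfolding e(3) unfolding e(1) e(2) by (simp only: power_add mult_ac)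
    qed
    have T3: "qmultinomial (int N - int j) [int k - 1, int N - int L - int j + 1, int L - int k] = Bq (N - j) (k - 1) * Bq (N - j - (k - 1)) (A + 1 - j)"
    proof -
      have "int N - int j = int (N - j)" "int N - int L - int j + 1 = int (A + 1 - j)" "int L - int k = int (L - k)"
        "int k - 1 = int (k - 1)"
        using k j AN Ld by auto
      moreover have "(k - 1) + (A + 1 - j) + (L - k) = N - j" using k j AN Ld by auto
      ultimately show ?thesis by (simp only: trinom)
    qed
    have E: "(j - 1) * k + (L - k) * (j - 1) + (k choose 2) = (k choose 2) + (j - 1) * L"
    proof -
      have "\<exists>r. L = k + r" using k by presburger
      then obtain r where "L = k + r" by blast
      moreover obtain j' where "j = Suc j'" using j by (cases j) auto
      ultimately show ?thesis by (simp add: algebra_simps)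
    qed
    show "(\<Sum>w\<in>?T. qX ^ quinv' n \<alpha> ell k w) =
           qX ^ ((\<Sum>t=ell..n-1. \<alpha> t choose 2) + (k choose 2) + (j - 1) * L) *
           qmultinomial (int N - int L) (map (\<lambda>t. int (\<alpha> t)) [2..<n]) *
           qmultinomial (int N - int j) [int k - 1, int N - int L - int j + 1, int L - int k]"
    proof -
      have "(\<Sum>w\<in>?T. qX ^ quinv' n \<alpha> ell k w) = qX ^ (base + (k choose 2) + ((j - 1) * k + (L - k) * (j - 1))) * (Bq (N - j) (k - 1) * Bq (N - j - (k - 1)) (A + 1 - j)) * SU"
        unfolding Q S by (simp only: power_add mult_ac)
      also have "base + (k choose 2) + ((j - 1) * k + (L - k) * (j - 1)) = base + ((k choose 2) + (j - 1) * L)" using E by linarith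
      finally show ?thesis unfolding M T3 base_def by (simp only: mult_ac add_ac)
    qed
  qed
qed


end
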